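(* Let $D$ be an Eulerian digraph (finite, without loops, parallel arcs or digons) which admits at least one simple dicycle intersection graph. Then $$\sum_{v\in V(D)}|N^{+2}(v)|\;\geq\;\sum_{v\in V(D)}|N^{+}(v)|.$$
   Context: All digraphs are finite, with no loops, no parallel arcs and no digons (a digon is a pair of arcs $u\to w$, $w\to u$). $N^{+}(v)$ is the set of out-neighbours of $v$; $N^{+2}(v)$ is the set of vertices $w\notin N^{+}(v)\cup\{v\}$ such that $u\to w$ is an arc for some $u\in N^{+}(v)$. An Eulerian digraph is a (weakly) connected digraph with a closed directed trail using every arc exactly once; equivalently a connected digraph with $d^{+}(v)=d^{-}(v)$ for all $v$. A cycle decomposition is a set of dicycles whose arc sets partition $A(D)$. The dicycle intersection graph associated with a cycle decomposition $\mathcal{F}$ is the multigraph with vertex set $\mathcal{F}$ having, for each pair of distinct dicycles $C,C'\in\mathcal{F}$ and each vertex lying on both, one edge between $C$ and $C'$. $D$ admits a simple dicycle intersection graph if for some cycle decomposition this multigraph has no parallel edges (equivalently, any two distinct dicycles of the decomposition share at most one vertex). *)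

theory Defs
  imports Main
begin

text \<open>It is a (simple) digraph in the paper's sense: finite, no loops, no digons
  (parallel arcs are impossible with an arc set).\<close>

definition digraph :: "'a set \<Rightarrow> ('a \<times> 'a) set \<Rightarrow> bool" where
  "digraph V A \<longleftrightarrow> finite V \<and> A \<subseteq> V \<times> V \<and>
     (\<forall>v. (v, v) \<notin> A) \<and> (\<forall>u w. (u, w) \<in> A \<longrightarrow> (w, u) \<notin> A)"

definition out_nbrs :: "('a \<times> 'a) set \<Rightarrow> 'a \<Rightarrow> 'a set" where
  "out_nbrs A v = {w. (v, w) \<in> A}"

definition in_nbrs :: "('a \<times> 'a) set \<Rightarrow> 'a \<Rightarrow> 'a set" where
  "in_nbrs A v = {u. (u, v) \<in> A}"

definition second_out_nbrs :: "('a \<times> 'a) set \<Rightarrow> 'a \<Rightarrow> 'a set" where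
  "second_out_nbrs A v =
     {w. w \<notin> out_nbrs A v \<and> w \<noteq> v \<and> (\<exists>u \<in> out_nbrs A v. (u, w) \<in> A)}"

definition weakly_connected :: "'a set \<Rightarrow> ('a \<times> 'a) set \<Rightarrow> bool" where
  "weakly_connected V A \<longleftrightarrow> (\<forall>u \<in> V. \<forall>w \<in> V. (u, w) \<in> (A \<union> A\<inverse>)\<^sup>*)"

definition eulerian :: "'a set \<Rightarrow> ('a \<times> 'a) set \<Rightarrow> bool" where
  "eulerian V A \<longleftrightarrow> weakly_connected V A \<and>
     (\<forall>v \<in> V. card (out_nbrs A v) = card (in_nbrs A v))"

text \<open>A dicycle, identified with its arc set: the arcs of a closed walk
  through a list of distinct vertices (length at least 2).\<close>
definition dicycle_arcs :: "'a list \<Rightarrow> ('a \<times> 'a) set" where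
  "dicycle_arcs vs = {(vs ! i, vs ! ((i + 1) mod length vs)) | i. i < length vs}"

definition is_dicycle :: "('a \<times> 'a) set \<Rightarrow> ('a \<times> 'a) set \<Rightarrow> bool" where
  "is_dicycle A C \<longleftrightarrow> (\<exists>vs. distinct vs \<and> length vs \<ge> 2 \<and> C = dicycle_arcs vs) \<and> C \<subseteq> A"

definition arc_verts :: "('a \<times> 'a) set \<Rightarrow> 'a set" where
  "arc_verts C = fst ` C \<union> snd ` C"

definition cycle_decomposition :: "('a \<times> 'a) set \<Rightarrow> ('a \<times> 'a) set set \<Rightarrow> bool" where
  "cycle_decomposition A F \<longleftrightarrow> (\<forall>C \<in> F. is_dicycle A C) \<and>
     (\<forall>C \<in> F. \<forall>C' \<in> F. C \<noteq> C' \<longrightarrow> C \<inter> C' = {}) \<and> \<Union>F = A"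

text \<open>The dicycle intersection graph of F is simple iff any two distinct
  dicycles of F share at most one vertex.\<close>
definition simple_intersection_decomp :: "('a \<times> 'a) set \<Rightarrow> ('a \<times> 'a) set set \<Rightarrow> bool" where
  "simple_intersection_decomp A F \<longleftrightarrow> cycle_decomposition A F \<and>
     (\<forall>C \<in> F. \<forall>C' \<in> F. C \<noteq> C' \<longrightarrow> card (arc_verts C \<inter> arc_verts C') \<le> 1)"

definition admits_simple_dig :: "('a \<times> 'a) set \<Rightarrow> bool" where
  "admits_simple_dig A \<longleftrightarrow> (\<exists>F. simple_intersection_decomp A F)"

end

theory Submission
  imports Defs
begin

lemma dc_succ_unique:
  assumes "distinct vs" "(a,b) \<in> dicycle_arcs vs" "(a,b') \<in> dicycle_arcs vs"
  shows "b = b'"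
proof -
  from assms(2) obtain i where i: "i < length vs" "a = vs ! i" "b = vs ! ((i+1) mod length vs)"
    unfolding dicycle_arcs_def by auto
  from assms(3) obtain j where j: "j < length vs" "a = vs ! j" "b' = vs ! ((j+1) mod length vs)"
    unfolding dicycle_arcs_def by auto
  have "i = j" using i j assms(1) nth_eq_iff_index_eq by metis
  thus ?thesis using i j by simp
qed

lemma dc_succ_exists:
  assumes "(a,b) \<in> dicycle_arcs vs"
  shows "\<exists>c. (b,c) \<in> dicycle_arcs vs"
proof -
  from assms obtain i where i: "i < length vs" "a = vs ! i" "b = vs ! ((i+1) mod length vs)"
    unfolding dicycle_arcs_def by auto
  define j where "j = (i+1) mod length vs"
  have "j < length vs" using i(1) unfolding j_def by (metis mod_less_divisor gr_implies_not0 not_gr0)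
  hence "(vs ! j, vs ! ((j+1) mod length vs)) \<in> dicycle_arcs vs"
    unfolding dicycle_arcs_def by blast
  thus ?thesis using i(3) j_def by auto
qed

lemma dicycle_succ_unique:
  assumes "is_dicycle A C" "(a,b) \<in> C" "(a,b') \<in> C"
  shows "b = b'"
  using assms dc_succ_unique unfolding is_dicycle_def by metis

lemma dicycle_succ_exists:
  assumes "is_dicycle A C" "(a,b) \<in> C"
  shows "\<exists>c. (b,c) \<in> C"
  using assms dc_succ_exists unfolding is_dicycle_def by metis

lemma share_two:
  assumes "finite A" "C \<subseteq> A" "C' \<subseteq> A" "u \<noteq> x"
    "u \<in> arc_verts C" "x \<in> arc_verts C" "u \<in> arc_verts C'" "x \<in> arc_verts C'"
  shows "card (arc_verts C \<inter> arc_verts C') \<ge> 2"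
proof -
  have "finite C" using assms finite_subset by blast
  hence f: "finite (arc_verts C)" unfolding arc_verts_def by simp
  have "{u,x} \<subseteq> arc_verts C \<inter> arc_verts C'" using assms by auto
  hence "card {u,x} \<le> card (arc_verts C \<inter> arc_verts C')"
    by (intro card_mono) (use f in auto)
  thus ?thesis using assms(4) by simp
qed

lemma av1: "(a,b) \<in> C \<Longrightarrow> a \<in> arc_verts C" unfolding arc_verts_def by force
lemma av2: "(a,b) \<in> C \<Longrightarrow> b \<in> arc_verts C" unfolding arc_verts_def by force

theorem corollary2p2:
  fixes V :: "'a set" and A :: "('a \<times> 'a) set"
  assumes "digraph V A"
    and "eulerian V A"
    and "admits_simple_dig A"
  shows "(\<Sum>v\<in>V. card (second_out_nbrs A v)) \<ge> (\<Sum>v\<in>V. card (out_nbrs A v))"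
proof -
  obtain F where sF: "simple_intersection_decomp A F"
    using assms(3) unfolding admits_simple_dig_def by blast
  have cyc: "\<And>C. C \<in> F \<Longrightarrow> is_dicycle A C"
    and disj: "\<And>C C'. C \<in> F \<Longrightarrow> C' \<in> F \<Longrightarrow> C \<noteq> C' \<Longrightarrow> C \<inter> C' = {}"
    and un: "\<Union>F = A"
    and sh: "\<And>C C'. C \<in> F \<Longrightarrow> C' \<in> F \<Longrightarrow> C \<noteq> C' \<Longrightarrow> card (arc_verts C \<inter> arc_verts C') \<le> 1"
    using sF unfolding simple_intersection_decomp_def cycle_decomposition_def by auto
  have finV: "finite V" and AV: "A \<subseteq> V \<times> V" and noloop: "\<And>v. (v,v) \<notin> A"
    and nodig: "\<And>u w. (u,w) \<in> A \<Longrightarrow> (w,u) \<notin> A"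
    using assms(1) unfolding digraph_def by auto
  have finA: "finite A" using finV AV finite_subset by blast
  have sub: "\<And>C. C \<in> F \<Longrightarrow> C \<subseteq> A" using cyc unfolding is_dicycle_def by blast
  have notshare: "\<And>C C' u x. C \<in> F \<Longrightarrow> C' \<in> F \<Longrightarrow> C \<noteq> C' \<Longrightarrow> u \<noteq> x \<Longrightarrow>
      u \<in> arc_verts C \<Longrightarrow> x \<in> arc_verts C \<Longrightarrow> u \<in> arc_verts C' \<Longrightarrow> x \<in> arc_verts C' \<Longrightarrow> False"
  proof -
    fix C C' u x assume h: "C \<in> F" "C' \<in> F" "C \<noteq> C'" "u \<noteq> x"
      "u \<in> arc_verts C" "x \<in> arc_verts C" "u \<in> arc_verts C'" "x \<in> arc_verts C'"
    have "card (arc_verts C \<inter> arc_verts C') \<ge> 2"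
      using share_two[OF finA sub[OF h(1)] sub[OF h(2)]] h by blast
    thus False using sh[OF h(1-3)] by simp
  qed
  define cy where "cy e = (SOME C. C \<in> F \<and> e \<in> C)" for e
  have cy: "\<And>e. e \<in> A \<Longrightarrow> cy e \<in> F \<and> e \<in> cy e"
  proof -
    fix e assume "e \<in> A"
    hence "\<exists>C. C \<in> F \<and> e \<in> C" using un by blast
    thus "cy e \<in> F \<and> e \<in> cy e" unfolding cy_def by (rule someI_ex)
  qed
  define nx where "nx e = (SOME x. (snd e, x) \<in> cy e)" for e
  have nx: "\<And>e. e \<in> A \<Longrightarrow> (snd e, nx e) \<in> cy e"
  proof -
    fix e assume e: "e \<in> A"
    have "\<exists>c. (snd e, c) \<in> cy e"
      using dicycle_succ_exists[OF cyc[OF conjunct1[OF cy[OF e]]], of "fst e" "snd e"] cy[OF e] by simp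
    thus "(snd e, nx e) \<in> cy e" unfolding nx_def by (rule someI_ex)
  qed
  define f where "f e = (fst e, nx e)" for e
  have fin2: "finite (Sigma V (second_out_nbrs A))"
  proof (rule finite_subset[of _ "V \<times> V"])
    show "Sigma V (second_out_nbrs A) \<subseteq> V \<times> V" using AV unfolding second_out_nbrs_def by blast
  qed (use finV in simp)
  have maps: "f ` A \<subseteq> Sigma V (second_out_nbrs A)"
  proof
    fix y assume "y \<in> f ` A"
    then obtain u w where e: "(u,w) \<in> A" and y: "y = (u, nx (u,w))"
      unfolding f_def by auto
    let ?C = "cy (u,w)" let ?x = "nx (u,w)"
    have CF: "?C \<in> F" and uwC: "(u,w) \<in> ?C" using cy[OF e] by auto
    have wx: "(w, ?x) \<in> ?C" using nx[OF e] by simp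
    have wxA: "(w, ?x) \<in> A" using wx sub[OF CF] by blast
    have xu: "?x \<noteq> u" using nodig[OF e] wxA by auto
    have "(u, ?x) \<notin> A"
    proof
      assume ux: "(u, ?x) \<in> A"
      have C2: "cy (u,?x) \<in> F" "(u,?x) \<in> cy (u,?x)" using cy[OF ux] by auto
      show False
      proof (cases "cy (u,?x) = ?C")
        case True
        hence "w = ?x" using dicycle_succ_unique[OF cyc[OF CF] uwC] C2 by simp
        thus False using noloop wxA by simp
      next
        case False
        show False
          by (rule notshare[OF C2(1) CF False xu[symmetric] av1[OF C2(2)] av2[OF C2(2)] av1[OF uwC] av2[OF wx]])
      qed
    qed
    moreover have "u \<in> V" using e AV by blast
    moreover have "w \<in> out_nbrs A u" using e unfolding out_nbrs_def by simp
    ultimately show "y \<in> Sigma V (second_out_nbrs A)"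
      using y xu wxA unfolding second_out_nbrs_def out_nbrs_def by auto
  qed
  have inj: "inj_on f A"
  proof
    fix e1 e2 assume e1: "e1 \<in> A" and e2: "e2 \<in> A" and eq: "f e1 = f e2"
    obtain u w where e1d: "e1 = (u,w)" by (cases e1)
    obtain u' w' where e2d: "e2 = (u',w')" by (cases e2)
    have uu: "u' = u" and xx: "nx e2 = nx e1" using eq e1d e2d unfolding f_def by auto
    let ?x = "nx e1"
    have C1: "cy e1 \<in> F" "e1 \<in> cy e1" and C2: "cy e2 \<in> F" "e2 \<in> cy e2" using cy e1 e2 by auto
    have wx: "(w, ?x) \<in> cy e1" using nx[OF e1] e1d by simp
    have wx2: "(w', ?x) \<in> cy e2" using nx[OF e2] e2d xx by simp
    have wxA: "(w, ?x) \<in> A" using wx sub[OF C1(1)] by blast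
    have xu: "?x \<noteq> u" using nodig e1 e1d wxA by auto
    show "e1 = e2"
    proof (cases "cy e1 = cy e2")
      case True
      have "(u,w) \<in> cy e1" "(u,w') \<in> cy e1" using True C1 C2 e1d e2d uu by auto
      hence "w = w'" using dicycle_succ_unique[OF cyc[OF C1(1)]] by blast
      thus ?thesis using e1d e2d uu by simp
    next
      case False
      have a1: "u \<in> arc_verts (cy e1)" using av1 C1(2) e1d by metis
      have a2: "u \<in> arc_verts (cy e2)" using av1 C2(2) e2d uu by metis
      show ?thesis
        by (rule FalseE, rule notshare[OF C1(1) C2(1) False xu[symmetric] a1 av2[OF wx] a2 av2[OF wx2]])
    qed
  qed
  have c1: "card A \<le> card (Sigma V (second_out_nbrs A))"
    using card_inj_on_le[OF inj maps fin2] .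
  have oV: "\<And>v. out_nbrs A v \<subseteq> V" using AV unfolding out_nbrs_def by blast
  have sV: "\<And>v. second_out_nbrs A v \<subseteq> V" using AV unfolding second_out_nbrs_def by blast
  have fs: "\<forall>v\<in>V. finite (second_out_nbrs A v)" using finite_subset[OF sV finV] by blast
  have fo: "\<forall>v\<in>V. finite (out_nbrs A v)" using finite_subset[OF oV finV] by blast
  have c2: "card (Sigma V (second_out_nbrs A)) = (\<Sum>v\<in>V. card (second_out_nbrs A v))"
    by (rule card_SigmaI[OF finV fs])
  have c3: "Sigma V (out_nbrs A) = A" using AV unfolding out_nbrs_def by auto
  have c4: "card (Sigma V (out_nbrs A)) = (\<Sum>v\<in>V. card (out_nbrs A v))"
    by (rule card_SigmaI[OF finV fo])
  show ?thesis using c1 unfolding c2 c4[unfolded c3, symmetric] .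
qed

end
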